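(* Let $\epsilon\in(0,\frac12)$ and let $G$ be a layered graph over $\Sigma_{in}$ of depth $n\ge\frac{2}{1-\epsilon}$. Let $|\Sigma_{out}|>(2|\Sigma_{in}|)^{6/\epsilon^2}$. Then a uniformly random $(G,\Sigma_{out})$-code (each edge label chosen independently and uniformly from $\Sigma_{out}$) is an $\epsilon$-sensitive layered code on $G$ with alphabet $\Sigma_{out}$ with probability at least $1-2^{-n/4\epsilon}$.
   Context: A layered graph over alphabet $\Sigma$ of depth $n$ is a directed graph whose vertices are partitioned into layers $0,\dots,n$, with exactly one vertex (the root) in layer $0$, and each vertex in layer $i<n$ has exactly $|\Sigma|$ out-edges to layer $i+1$ labeled by the distinct elements of $\Sigma$ (endpoints need not be distinct). A string $p\in\Sigma_{in}^i$ determines a unique root path ending at vertex $v(p)$ in layer $i$. A $(G,\Sigma_{out})$-code $\mathsf{C}$ assigns an element of $\Sigma_{out}$ to each edge; $\mathsf{C}(p)$ is the label string along $p$. Suffix distance: $\Delta_{sfx}(x,y)=\max_{0\le i\le m-1}\frac{\Delta(x[i+1:m],y[i+1:m])}{m-i}$ for $x,y\in\Sigma^m$, $\Delta$ Hamming distance. $L_i(\mathsf{C},w,\epsilon)=\{v(p):p\in\Sigma_{in}^i,\ \Delta_{sfx}(\mathsf{C}(p),w[1:i])<1-\epsilon\}$, $L(\mathsf{C},w,\epsilon)=\bigcup_{i=1}^nL_i(\mathsf{C},w,\epsilon)$. For $S\subseteq L(\mathsf{C},w,\epsilon)$, a prefix tree of $S$ is a union of paths $p(v)$ ($v\in S$)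 from the root to $v$, each with $\Delta_{sfx}(\mathsf{C}(p(v)),w[1:|p(v)|])<1-\epsilon$, that forms a rooted tree; $\mathcal{PT}(\mathsf{C},w,\epsilon)$ is the set of all prefix trees of all subsets of $L(\mathsf{C},w,\epsilon)$. For a subgraph $H$, $w(H)$ labels each edge of $H$ at depth $i$ with $w[i]$, $\mathsf{C}(H)$ labels by $\mathsf{C}$, and $agr(\mathsf{C}(H),w(H))$ is the number of edges of $H$ with equal labels. A $(G,\Sigma_{out})$-code $\mathsf{C}$ is an $\epsilon$-sensitive layered code if for all $w\in\Sigma_{out}^n$ and all $PT\in\mathcal{PT}(\mathsf{C},w,\epsilon)$, $agr(\mathsf{C}(PT),w(PT))\le(1+\epsilon)n$. *)

theory Defs
  imports "HOL-Probability.Probability"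
begin

text \<open>An edge is identified with
  the pair (v, a) (so parallel edges are allowed).\<close>
definition layered_graph ::
  "'v set \<Rightarrow> ('v \<Rightarrow> nat) \<Rightarrow> 'v \<Rightarrow> ('v \<Rightarrow> 'a \<Rightarrow> 'v) \<Rightarrow> nat \<Rightarrow> bool" where
  "layered_graph V lay r \<delta> n \<longleftrightarrow>
     finite V \<and> (\<forall>v\<in>V. lay v \<le> n) \<and> r \<in> V \<and> {v\<in>V. lay v = 0} = {r} \<and>
     (\<forall>v\<in>V. lay v < n \<longrightarrow> (\<forall>a. \<delta> v a \<in> V \<and> lay (\<delta> v a) = Suc (lay v)))"

definition graph_edges :: "'v set \<Rightarrow> ('v \<Rightarrow> nat) \<Rightarrow> nat \<Rightarrow> ('v \<times> 'a) set" where
  "graph_edges V lay n = {(v, a). v \<in> V \<and> lay v < n}"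

definition run :: "'v \<Rightarrow> ('v \<Rightarrow> 'a \<Rightarrow> 'v) \<Rightarrow> 'a list \<Rightarrow> 'v" where
  "run r \<delta> p = foldl \<delta> r p"

definition path_edges :: "'v \<Rightarrow> ('v \<Rightarrow> 'a \<Rightarrow> 'v) \<Rightarrow> 'a list \<Rightarrow> ('v \<times> 'a) set" where
  "path_edges r \<delta> p = {(run r \<delta> (take j p), p ! j) | j. j < length p}"

definition code_word :: "'v \<Rightarrow> ('v \<Rightarrow> 'a \<Rightarrow> 'v) \<Rightarrow> ('v \<times> 'a \<Rightarrow> 'b) \<Rightarrow> 'a list \<Rightarrow> 'b list" where
  "code_word r \<delta> C p = map (\<lambda>j. C (run r \<delta> (take j p), p ! j)) [0..<length p]"

definition hamming :: "'b list \<Rightarrow> 'b list \<Rightarrow> nat" where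
  "hamming x y = card {j. j < length x \<and> x ! j \<noteq> y ! j}"

text \<open>Suffix distance of two strings of the same length m \<ge> 1.\<close>
definition sfx_dist :: "'b list \<Rightarrow> 'b list \<Rightarrow> real" where
  "sfx_dist x y = Max ((\<lambda>i. real (hamming (drop i x) (drop i y)) / real (length x - i)) ` {0..<length x})"

definition L_layer :: "'v \<Rightarrow> ('v \<Rightarrow> 'a \<Rightarrow> 'v) \<Rightarrow> ('v \<times> 'a \<Rightarrow> 'b) \<Rightarrow> 'b list \<Rightarrow> real \<Rightarrow> nat \<Rightarrow> 'v set" where
  "L_layer r \<delta> C w \<epsilon> i = {run r \<delta> p | p. length p = i \<and> sfx_dist (code_word r \<delta> C p) (take i w) < 1 - \<epsilon>}"

definition L_set :: "'v \<Rightarrow> ('v \<Rightarrow> 'a \<Rightarrow> 'v) \<Rightarrow> ('v \<times> 'a \<Rightarrow> 'b) \<Rightarrow> 'b list \<Rightarrow> real \<Rightarrow> nat \<Rightarrow> 'v set" where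
  "L_set r \<delta> C w \<epsilon> n = (\<Union>i\<in>{1..n}. L_layer r \<delta> C w \<epsilon> i)"

text \<open>An edge set H is a rooted tree (arborescence) with root r: every edge's tail is
  reachable from the root inside H, and each vertex is the end of at most one root
  path inside H (edges of a path are determined by its label string).\<close>
definition rooted_tree :: "'v \<Rightarrow> ('v \<Rightarrow> 'a \<Rightarrow> 'v) \<Rightarrow> ('v \<times> 'a) set \<Rightarrow> bool" where
  "rooted_tree r \<delta> H \<longleftrightarrow>
     (\<forall>(u, a)\<in>H. \<exists>p. path_edges r \<delta> p \<subseteq> H \<and> run r \<delta> p = u) \<and>
     (\<forall>p q. path_edges r \<delta> p \<subseteq> H \<and> path_edges r \<delta> q \<subseteq> H \<and> run r \<delta> p = run r \<delta> q \<longrightarrow> p = q)"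

definition prefix_trees ::
  "('v \<Rightarrow> nat) \<Rightarrow> 'v \<Rightarrow> ('v \<Rightarrow> 'a \<Rightarrow> 'v) \<Rightarrow> nat \<Rightarrow> ('v \<times> 'a \<Rightarrow> 'b) \<Rightarrow> 'b list \<Rightarrow> real \<Rightarrow> ('v \<times> 'a) set set" where
  "prefix_trees lay r \<delta> n C w \<epsilon> =
     {H. \<exists>S P. S \<subseteq> L_set r \<delta> C w \<epsilon> n \<and>
          (\<forall>v\<in>S. length (P v) = lay v \<and> run r \<delta> (P v) = v \<and>
                  sfx_dist (code_word r \<delta> C (P v)) (take (length (P v)) w) < 1 - \<epsilon>) \<and>
          H = (\<Union>v\<in>S. path_edges r \<delta> (P v)) \<and> rooted_tree r \<delta> H}"

text \<open>agr(C(H), w(H)): an edge (u,a) lies at depth lay u + 1 and is labelled w[lay u + 1]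
  (0-indexed: w ! lay u).\<close>
definition agr :: "('v \<Rightarrow> nat) \<Rightarrow> ('v \<times> 'a \<Rightarrow> 'b) \<Rightarrow> 'b list \<Rightarrow> ('v \<times> 'a) set \<Rightarrow> nat" where
  "agr lay C w H = card {(u, a) \<in> H. C (u, a) = w ! lay u}"

definition eps_sensitive ::
  "('v \<Rightarrow> nat) \<Rightarrow> 'v \<Rightarrow> ('v \<Rightarrow> 'a \<Rightarrow> 'v) \<Rightarrow> nat \<Rightarrow> ('v \<times> 'a \<Rightarrow> 'b) \<Rightarrow> real \<Rightarrow> bool" where
  "eps_sensitive lay r \<delta> n C \<epsilon> \<longleftrightarrow>
     (\<forall>w. length w = n \<longrightarrow>
        (\<forall>H\<in>prefix_trees lay r \<delta> n C w \<epsilon>. real (agr lay C w H) \<le> (1 + \<epsilon>) * real n))"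

text \<open>Uniformly random (G, 'b)-code: independent uniform labels on all edges
  (uniform over the finite set of labelings of the edge set).\<close>
definition random_code :: "'v set \<Rightarrow> ('v \<Rightarrow> nat) \<Rightarrow> nat \<Rightarrow> ('v \<times> 'a \<Rightarrow> 'b::finite) pmf" where
  "random_code V lay n = pmf_of_set (PiE (graph_edges V lay n) (\<lambda>_. UNIV))"

end

theory Submission
  imports Defs
begin

definition trees :: "nat \<Rightarrow> 'a list set set" where
  "trees d = {T. (\<forall>s\<in>T. s \<noteq> [] \<and> length s \<le> d) \<and>
                 (\<forall>s\<in>T. \<forall>i. 0 < i \<longrightarrow> i < length s \<longrightarrow> take i s \<in> T)}"

lemma finite_trees: "finite (trees d :: ('a::finite) list set set)"
proof -
  have "trees d \<subseteq> Pow {xs :: 'a list. set xs \<subseteq> UNIV \<and> length xs \<le> d}"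
    unfolding trees_def by auto
  moreover have "finite (Pow {xs :: 'a list. set xs \<subseteq> UNIV \<and> length xs \<le> d})"
    using finite_lists_length_le[of "UNIV :: 'a set" d] by simp
  ultimately show ?thesis by (rule finite_subset)
qed

lemma finite_tree: "T \<in> trees d \<Longrightarrow> finite (T :: ('a::finite) list set)"
proof -
  assume "T \<in> trees d"
  then have "T \<subseteq> {xs :: 'a list. set xs \<subseteq> UNIV \<and> length xs \<le> d}"
    unfolding trees_def by auto
  moreover have "finite {xs :: 'a list. set xs \<subseteq> UNIV \<and> length xs \<le> d}"
    using finite_lists_length_le[of "UNIV :: 'a set" d] by simp
  ultimately show ?thesis by (rule finite_subset)
qed

lemma trees_0: "trees 0 = {{}}"
  unfolding trees_def by auto

definition subt :: "'a \<Rightarrow> 'a list set \<Rightarrow> 'a list set" where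
  "subt a T = {s. s \<noteq> [] \<and> a # s \<in> T}"

definition phi :: "'a list set \<Rightarrow> 'a \<Rightarrow> 'a list set option" where
  "phi T = (\<lambda>a. if [a] \<in> T then Some (subt a T) else None)"

definition gw :: "real \<Rightarrow> 'a list set option \<Rightarrow> real" where
  "gw z o' = (case o' of None \<Rightarrow> 1 | Some U \<Rightarrow> z * z ^ card U)"

lemma subt_trees: "T \<in> trees (Suc d) \<Longrightarrow> subt a T \<in> trees d"
proof -
  assume T: "T \<in> trees (Suc d)"
  have A: "s \<noteq> [] \<and> length s \<le> d" if "s \<in> subt a T" for s
    using T that unfolding trees_def subt_def by auto
  have B: "take i s \<in> subt a T" if s: "s \<in> subt a T" and i: "0 < i" "i < length s" for s i
  proof -
    have "\<forall>j. 0 < j \<longrightarrow> j < length (a # s) \<longrightarrow> take j (a # s) \<in> T"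
      using T s unfolding trees_def subt_def by blast
    then have "take (Suc i) (a # s) \<in> T" using i by auto
    then show ?thesis using i unfolding subt_def by auto
  qed
  show ?thesis unfolding trees_def using A B by blast
qed

lemma phi_inj: "inj_on phi (trees (Suc d))"
proof (rule inj_onI)
  fix T T' assume T: "T \<in> trees (Suc d)" and T': "T' \<in> trees (Suc d)" and eq: "phi T = phi T'"
  have key: "s \<in> T'" if "s \<in> T" "phi T = phi T'" "T \<in> trees (Suc d)" "T' \<in> trees (Suc d)"
    for s T T'
  proof -
    from that have "s \<noteq> []" unfolding trees_def by auto
    then obtain a s' where s: "s = a # s'" by (cases s) auto
    have "[a] \<in> T"
    proof (cases "s' = []")
      case True then show ?thesis using that s by simp
    next
      case False
      have "\<forall>j. 0 < j \<longrightarrow> j < length s \<longrightarrow> take j s \<in> T"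
        using that unfolding trees_def by blast
      then have "take 1 s \<in> T" using False s by auto
      then show ?thesis using s by simp
    qed
    then have "phi T a = Some (subt a T)" unfolding phi_def by simp
    then have pa: "phi T' a = Some (subt a T)" using that by simp
    then have "[a] \<in> T'" unfolding phi_def by (auto split: if_splits)
    with pa have "subt a T' = subt a T" unfolding phi_def by auto
    show "s \<in> T'"
    proof (cases "s' = []")
      case True then show ?thesis using \<open>[a] \<in> T'\<close> s by simp
    next
      case False
      then have "s' \<in> subt a T" using that s unfolding subt_def by auto
      then have "s' \<in> subt a T'" using \<open>subt a T' = subt a T\<close> by simp
      then show ?thesis using s unfolding subt_def by auto
    qed
  qed
  have 1: "s \<in> T'" if "s \<in> T" for s using key[OF that eq T T'] .
  have 2: "s \<in> T" if "s \<in> T'" for s using key[OF that eq[symmetric] T' T] .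
  show "T = T'" using 1 2 by blast
qed

lemma phi_weight:
  fixes z :: real
  assumes T: "T \<in> trees (Suc d)"
  shows "z ^ card (T :: ('a::finite) list set) = (\<Prod>a\<in>UNIV. gw z (phi T a))"
proof -
  define Ta where "Ta a = {s\<in>T. hd s = a}" for a
  have fT: "finite T" using finite_tree[OF T] .
  have Tu: "T = (\<Union>a\<in>UNIV. Ta a)" using T unfolding Ta_def by auto
  have cardT: "card T = (\<Sum>a\<in>UNIV. card (Ta a))"
    unfolding Tu
  proof (rule card_UN_disjoint)
    show "finite (UNIV :: 'a set)" by simp
    show "\<forall>i\<in>UNIV. finite (Ta i)" using fT unfolding Ta_def by simp
    show "\<forall>i\<in>UNIV. \<forall>j\<in>UNIV. i \<noteq> j \<longrightarrow> Ta i \<inter> Ta j = {}" unfolding Ta_def by blast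
  qed
  have cTa: "z ^ card (Ta a) = gw z (phi T a)" for a
  proof (cases "[a] \<in> T")
    case True
    have "Ta a = insert [a] ((#) a ` subt a T)"
    proof (rule set_eqI, rule iffI)
      fix s assume "s \<in> Ta a"
      then have s: "s \<in> T" "hd s = a" unfolding Ta_def by auto
      then have "s \<noteq> []" using T unfolding trees_def by auto
      then obtain s' where s': "s = a # s'" using s(2) by (cases s) auto
      show "s \<in> insert [a] ((#) a ` subt a T)"
      proof (cases "s' = []")
        case True then show ?thesis using s' by simp
      next
        case False then have "s' \<in> subt a T" using s s' unfolding subt_def by simp
        then show ?thesis using s' by blast
      qed
    next
      fix s assume "s \<in> insert [a] ((#) a ` subt a T)"
      then show "s \<in> Ta a" using True unfolding Ta_def subt_def by auto
    qed
    moreover have "finite (subt a T)" using finite_tree[OF subt_trees[OF T]] .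
    moreover have "[a] \<notin> (#) a ` subt a T" unfolding subt_def by auto
    ultimately have "card (Ta a) = Suc (card (subt a T))"
      by (simp add: card_image)
    then show ?thesis using True unfolding gw_def phi_def by simp
  next
    case False
    have "Ta a = {}"
    proof (rule ccontr)
      assume "Ta a \<noteq> {}"
      then obtain s where s: "s \<in> T" "hd s = a" unfolding Ta_def by auto
      then have "s \<noteq> []" using T unfolding trees_def by auto
      then obtain s' where s': "s = a # s'" using s by (cases s) auto
      show False
      proof (cases "s' = []")
        case True then show False using s s' False by simp
      next
        case False
        have "\<forall>j. 0 < j \<longrightarrow> j < length s \<longrightarrow> take j s \<in> T"
          using T s unfolding trees_def by blast
        then have "take 1 s \<in> T" using False s' by auto
        then show False using s' \<open>[a] \<notin> T\<close> by simp
      qed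
    qed
    then show ?thesis using False unfolding gw_def phi_def by simp
  qed
  show ?thesis unfolding cardT power_sum using cTa by simp
qed

lemma W_step:
  fixes z :: real
  assumes z: "z \<ge> 0"
  shows "(\<Sum>T\<in>trees (Suc d). z ^ card (T :: ('a::finite) list set))
         \<le> (1 + z * (\<Sum>T\<in>trees d. z ^ card (T :: 'a list set))) ^ CARD('a)"
proof -
  define Opt where "Opt = insert None (Some ` (trees d :: 'a list set set))"
  have fd0: "finite (trees d :: 'a list set set)" by (rule finite_trees)
  have fOpt: "finite Opt" unfolding Opt_def using fd0 by simp
  have gpos: "gw z o' \<ge> 0" for o' using z unfolding gw_def by (auto split: option.splits)
  have "(\<Sum>T\<in>trees (Suc d). z ^ card (T :: 'a list set))
        = (\<Sum>T\<in>trees (Suc d). \<Prod>a\<in>(UNIV::'a set). gw z (phi T a))"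
    by (rule sum.cong) (auto simp: phi_weight)
  also have "\<dots> = (\<Sum>f\<in>phi ` (trees (Suc d) :: 'a list set set). \<Prod>a\<in>(UNIV::'a set). gw z (f a))"
    using sum.reindex[OF phi_inj[of d], of "\<lambda>f. \<Prod>a\<in>(UNIV::'a set). gw z (f a)"]
    by (simp add: comp_def)
  also have "\<dots> \<le> (\<Sum>f\<in>PiE (UNIV::'a set) (\<lambda>_. Opt). \<Prod>a\<in>(UNIV::'a set). gw z (f a))"
  proof (rule sum_mono2)
    show "finite (PiE (UNIV::'a set) (\<lambda>_. Opt))" using fOpt by (simp add: finite_PiE)
    show "phi ` trees (Suc d) \<subseteq> PiE (UNIV::'a set) (\<lambda>_. Opt)"
      unfolding Opt_def phi_def using subt_trees by fastforce
    show "\<And>b. b \<in> PiE (UNIV::'a set) (\<lambda>_. Opt) - phi ` trees (Suc d) \<Longrightarrow> 0 \<le> (\<Prod>a\<in>(UNIV::'a set). gw z (b a))"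
      using gpos by (intro prod_nonneg) auto
  qed
  also have "\<dots> = (\<Prod>a\<in>(UNIV::'a set). \<Sum>o'\<in>Opt. gw z o')"
    by (rule prod_sum_PiE[symmetric]) (use fOpt in auto)
  also have "\<dots> = (1 + z * (\<Sum>T\<in>trees d. z ^ card (T :: 'a list set))) ^ CARD('a)"
  proof -
    have "(\<Sum>o'\<in>Opt. gw z o') = 1 + (\<Sum>U\<in>(trees d :: 'a list set set). gw z (Some U))"
    proof -
      have fd: "finite (trees d :: 'a list set set)" by (rule finite_trees)
      show ?thesis unfolding Opt_def using fd by (simp add: sum.reindex gw_def)
    qed
    also have "\<dots> = 1 + z * (\<Sum>T\<in>trees d. z ^ card (T :: 'a list set))"
      by (simp add: gw_def sum_distrib_left)
    finally show ?thesis by simp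
  qed
  finally show ?thesis .
qed

lemma W_bound:
  shows "(\<Sum>T\<in>trees d. (1 / (4 * real CARD('a))) ^ card (T :: ('a::finite) list set)) \<le> 2"
proof (induction d)
  case 0
  then show ?case by (simp add: trees_0)
next
  case (Suc d)
  define k where "k = real CARD('a)"
  have k: "k \<ge> 1" unfolding k_def by simp
  define z where "z = 1 / (4 * k)"
  have z: "z \<ge> 0" unfolding z_def using k by simp
  have W0: "(\<Sum>T\<in>trees d. z ^ card (T :: 'a list set)) \<ge> 0"
    using z by (simp add: sum_nonneg)
  have "(\<Sum>T\<in>trees (Suc d). z ^ card (T :: 'a list set))
        \<le> (1 + z * (\<Sum>T\<in>trees d. z ^ card (T :: 'a list set))) ^ CARD('a)"
    by (rule W_step[OF z])
  also have "\<dots> \<le> (1 + z * 2) ^ CARD('a)"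
  proof (rule power_mono)
    have "z * (\<Sum>T\<in>trees d. z ^ card (T :: 'a list set)) \<le> z * 2"
      by (rule mult_left_mono) (use Suc z in \<open>auto simp: z_def k_def\<close>)
    then show "1 + z * (\<Sum>T\<in>trees d. z ^ card (T :: 'a list set)) \<le> 1 + z * 2" by simp
    show "0 \<le> 1 + z * (\<Sum>T\<in>trees d. z ^ card (T :: 'a list set))" using z W0 by simp
  qed
  also have "\<dots> \<le> exp (z * 2) ^ CARD('a)"
    by (rule power_mono) (use z in \<open>auto simp: exp_ge_add_one_self\<close>)
  also have "\<dots> = exp (z * 2 * k)" unfolding k_def by (simp add: exp_of_nat_mult[symmetric] mult.commute)
  also have "\<dots> = exp (1/2)" unfolding z_def using k by simp
  also have "\<dots> \<le> 2" by (rule exp_half_le2)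
  finally show ?case unfolding z_def k_def .
qed

definition pref :: "'a list \<Rightarrow> 'a list set" where
  "pref p = {take (Suc j) p | j. j < length p}"

definition Uf :: "'a list set \<Rightarrow> 'a list set" where
  "Uf F = \<Union> (pref ` F)"

lemma Uf_take:
  assumes "s \<in> Uf F" "0 < i" "i \<le> length s"
  shows "take i s \<in> Uf F"
proof -
  from assms(1) obtain q j where q: "q \<in> F" "j < length q" "s = take (Suc j) q"
    unfolding Uf_def pref_def by auto
  have "i \<le> Suc j" using q assms by simp
  then have "take i s = take i q" using q by (simp add: min_def)
  then have "take i s = take (Suc (i - 1)) q" using assms by simp
  moreover have "i - 1 < length q" using q assms by simp
  ultimately show ?thesis using q unfolding Uf_def pref_def by blast
qed

lemma downclosed_nat:
  fixes J :: "nat set"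
  assumes "finite J" "\<And>j j'. j \<in> J \<Longrightarrow> j' \<le> j \<Longrightarrow> j' \<in> J"
  shows "J = {..<card J}"
proof (cases "J = {}")
  case True then show ?thesis by simp
next
  case False
  have "J = {..Max J}"
  proof
    show "J \<subseteq> {..Max J}" using assms(1) by auto
    show "{..Max J} \<subseteq> J" using assms(2)[OF Max_in[OF assms(1) False]] by auto
  qed
  then have "J = {..<Suc (Max J)}" by (simp add: lessThan_Suc_atMost)
  then have "card J = Suc (Max J)" by (metis card_lessThan)
  then show ?thesis using \<open>J = {..<Suc (Max J)}\<close> by simp
qed

lemma density:
  fixes F :: "'a list set" and G :: "'a list \<Rightarrow> bool" and \<epsilon> :: real
  assumes "finite F" "\<epsilon> \<ge> 0"
    and "\<forall>p\<in>F. \<forall>i<length p. \<epsilon> * real (length p - i) < real (card {j. i \<le> j \<and> j < length p \<and> G (take (Suc j) p)})"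
  shows "\<epsilon> * real (card (Uf F)) \<le> real (card {s \<in> Uf F. G s})"
  using assms
proof (induction F rule: finite_induct)
  case empty
  then show ?case by (simp add: Uf_def)
next
  case (insert p F)
  define X where "X = Uf F"
  have fpref: "finite (pref q)" for q :: "'a list"
  proof -
    have "pref q = (\<lambda>j. take (Suc j) q) ` {..<length q}" unfolding pref_def by auto
    then show ?thesis by simp
  qed
  have fX: "finite X" unfolding X_def Uf_def using insert(1) fpref by simp
  have IH: "\<epsilon> * real (card X) \<le> real (card {s \<in> X. G s})"
    using insert unfolding X_def by simp
  define J where "J = {j. j < length p \<and> take (Suc j) p \<in> X}"
  have fJ: "finite J" unfolding J_def by simp
  have dc: "j' \<in> J" if "j \<in> J" "j' \<le> j" for j j'
  proof -
    have "take (Suc j') (take (Suc j) p) \<in> X"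
      using Uf_take[of "take (Suc j) p" F "Suc j'"] that unfolding J_def X_def by auto
    then show ?thesis using that unfolding J_def by (simp add: min_def)
  qed
  define m where "m = card J"
  have Jm: "J = {..<m}" unfolding m_def
  proof (rule downclosed_nat[OF fJ])
    fix j j' assume "j \<in> J" "j' \<le> j" then show "j' \<in> J" by (rule dc)
  qed
  have mle: "m \<le> length p"
  proof -
    have "J \<subseteq> {..<length p}" unfolding J_def by auto
    then show ?thesis unfolding m_def using card_mono[of "{..<length p}" J] by simp
  qed
  have inX: "take (Suc j) p \<in> X \<longleftrightarrow> j < m" if "j < length p" for j
    using that Jm unfolding J_def by auto
  define f where "f j = take (Suc j) p" for j
  have finj: "inj_on f {..<length p}"
  proof (rule inj_onI)
    fix j j' assume "j \<in> {..<length p}" "j' \<in> {..<length p}" "f j = f j'"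
    then have "length (f j) = length (f j')" by simp
    then show "j = j'" using \<open>j \<in> _\<close> \<open>j' \<in> _\<close> unfolding f_def by simp
  qed
  have new: "pref p - X = f ` {m..<length p}"
  proof
    show "pref p - X \<subseteq> f ` {m..<length p}"
      unfolding pref_def f_def using inX by (auto simp: not_less)
    show "f ` {m..<length p} \<subseteq> pref p - X"
      unfolding pref_def f_def using inX by auto
  qed
  have Ui: "Uf (insert p F) = X \<union> (pref p - X)" unfolding X_def Uf_def by auto
  have cN: "card (pref p - X) = length p - m"
  proof -
    have "inj_on f {m..<length p}" by (rule inj_on_subset[OF finj]) auto
    then show ?thesis unfolding new by (simp add: card_image)
  qed
  have gN: "{s \<in> pref p - X. G s} = f ` {j \<in> {m..<length p}. G (f j)}"
    unfolding new by auto
  have cgN: "card {s \<in> pref p - X. G s} = card {j. m \<le> j \<and> j < length p \<and> G (take (Suc j) p)}"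
  proof -
    have "inj_on f {j \<in> {m..<length p}. G (f j)}" by (rule inj_on_subset[OF finj]) auto
    then have "card (f ` {j \<in> {m..<length p}. G (f j)}) = card {j \<in> {m..<length p}. G (f j)}"
      by (rule card_image)
    moreover have "{j \<in> {m..<length p}. G (f j)} = {j. m \<le> j \<and> j < length p \<and> G (take (Suc j) p)}"
      unfolding f_def by auto
    ultimately show ?thesis unfolding gN by simp
  qed
  have step: "\<epsilon> * real (length p - m) \<le> real (card {j. m \<le> j \<and> j < length p \<and> G (take (Suc j) p)})"
  proof (cases "m < length p")
    case True
    then show ?thesis using insert(5) by (auto intro: less_imp_le)
  next
    case False then have "length p - m = 0" using mle by simp
    then show ?thesis by simp
  qed
  have c1: "card (Uf (insert p F)) = card X + card (pref p - X)"
    unfolding Ui by (rule card_Un_disjoint) (use fX fpref in auto)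
  have c2: "card {s \<in> Uf (insert p F). G s} = card {s \<in> X. G s} + card {s \<in> pref p - X. G s}"
  proof -
    have "{s \<in> Uf (insert p F). G s} = {s \<in> X. G s} \<union> {s \<in> pref p - X. G s}" unfolding Ui by auto
    moreover have "card ({s \<in> X. G s} \<union> {s \<in> pref p - X. G s}) = card {s \<in> X. G s} + card {s \<in> pref p - X. G s}"
      by (rule card_Un_disjoint) (use fX fpref in auto)
    ultimately show ?thesis by simp
  qed
  show ?case unfolding c1 c2 using IH step cN cgN by (simp add: distrib_left)
qed

lemma sfx_agree:
  fixes x y :: "'b list" and \<epsilon> :: real
  assumes "length x = L" "length y = L" "sfx_dist x y < 1 - \<epsilon>" "i < L"
  shows "\<epsilon> * real (L - i) < real (card {j. i \<le> j \<and> j < L \<and> x ! j = y ! j})"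
proof -
  define h where "h i = real (hamming (drop i x) (drop i y)) / real (length x - i)" for i
  have "h i \<le> sfx_dist x y" unfolding sfx_dist_def h_def
    by (rule Max_ge) (use assms in auto)
  then have hi: "h i < 1 - \<epsilon>" using assms by simp
  define D where "D = {j. i \<le> j \<and> j < L \<and> x ! j \<noteq> y ! j}"
  define Ag where "Ag = {j. i \<le> j \<and> j < L \<and> x ! j = y ! j}"
  have ham: "hamming (drop i x) (drop i y) = card D"
  proof -
    have "{j. j < length (drop i x) \<and> drop i x ! j \<noteq> drop i y ! j} = (\<lambda>j. j - i) ` D"
    proof
      show "{j. j < length (drop i x) \<and> drop i x ! j \<noteq> drop i y ! j} \<subseteq> (\<lambda>j. j - i) ` D"
      proof
        fix j assume "j \<in> {j. j < length (drop i x) \<and> drop i x ! j \<noteq> drop i y ! j}"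
        then have "i + j \<in> D" using assms unfolding D_def by auto
        then show "j \<in> (\<lambda>j. j - i) ` D" by (metis add_diff_cancel_left' image_eqI)
      qed
      show "(\<lambda>j. j - i) ` D \<subseteq> {j. j < length (drop i x) \<and> drop i x ! j \<noteq> drop i y ! j}"
        using assms unfolding D_def by auto
    qed
    moreover have "inj_on (\<lambda>j. j - i) D" unfolding D_def by (rule inj_onI) auto
    ultimately show ?thesis unfolding hamming_def by (simp add: card_image)
  qed
  have DA: "card D + card Ag = L - i"
  proof -
    have "D \<union> Ag = {i..<L}" "D \<inter> Ag = {}" unfolding D_def Ag_def by auto
    then have "card D + card Ag = card {i..<L}"
      by (metis card_Un_disjoint finite_Un finite_atLeastLessThan)
    then show ?thesis by simp
  qed
  have "real (card D) < (1 - \<epsilon>) * real (L - i)"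
    using hi assms unfolding h_def ham by (simp add: divide_less_eq)
  moreover have "real (card D) + real (card Ag) = real (L - i)"
    using DA by (metis of_nat_add)
  ultimately show ?thesis unfolding Ag_def[symmetric] by (simp add: algebra_simps)
qed

definition edg :: "'v \<Rightarrow> ('v \<Rightarrow> 'a \<Rightarrow> 'v) \<Rightarrow> 'a list \<Rightarrow> 'v \<times> 'a" where
  "edg r \<delta> s = (run r \<delta> (butlast s), last s)"

lemma run_snoc: "run r \<delta> (p @ [a]) = \<delta> (run r \<delta> p) a"
  by (simp add: run_def)

lemma run_lay:
  assumes lg: "layered_graph V lay r \<delta> n"
  shows "length p \<le> n \<Longrightarrow> run r \<delta> p \<in> V \<and> lay (run r \<delta> p) = length p"
proof (induction p rule: rev_induct)
  case Nil
  have "r \<in> V" "lay r = 0" using lg unfolding layered_graph_def by auto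
  then show ?case by (simp add: run_def)
next
  case (snoc a p)
  then have IH: "run r \<delta> p \<in> V" "lay (run r \<delta> p) = length p" "length p < n" by auto
  then show ?case using lg unfolding layered_graph_def by (auto simp: run_snoc)
qed

lemma edge_take:
  "j < length p \<Longrightarrow> edg r \<delta> (take (Suc j) p) = (run r \<delta> (take j p), p ! j)"
  by (simp add: edg_def take_Suc_conv_app_nth)

lemma path_edges_pref: "path_edges r \<delta> p = edg r \<delta> ` pref p"
proof
  show "path_edges r \<delta> p \<subseteq> edg r \<delta> ` pref p"
  proof
    fix x assume "x \<in> path_edges r \<delta> p"
    then obtain j where j: "j < length p" "x = (run r \<delta> (take j p), p ! j)"
      unfolding path_edges_def by blast
    then have "x = edg r \<delta> (take (Suc j) p)" by (simp add: edge_take)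
    moreover have "take (Suc j) p \<in> pref p" using j unfolding pref_def by blast
    ultimately show "x \<in> edg r \<delta> ` pref p" by blast
  qed
  show "edg r \<delta> ` pref p \<subseteq> path_edges r \<delta> p"
    unfolding path_edges_def pref_def by (auto simp: edge_take)
qed

lemma path_edges_take: "path_edges r \<delta> (take j p) \<subseteq> path_edges r \<delta> p"
proof
  fix x assume "x \<in> path_edges r \<delta> (take j p)"
  then obtain i where i: "i < length (take j p)" "x = (run r \<delta> (take i (take j p)), take j p ! i)"
    unfolding path_edges_def by blast
  then have "i < j" "i < length p" by auto
  then have "x = (run r \<delta> (take i p), p ! i)" using i by (simp add: min_def)
  then show "x \<in> path_edges r \<delta> p" unfolding path_edges_def using \<open>i < length p\<close> by blast
qed

lemma cert_exists:
  fixes C :: "'v \<times> 'a \<Rightarrow> 'b" and \<epsilon> :: real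
  assumes lg: "layered_graph V lay r \<delta> n" and \<epsilon>: "0 < \<epsilon>"
    and ns: "\<not> eps_sensitive lay r \<delta> n C \<epsilon>"
  shows "\<exists>T A. T \<in> trees n \<and> A \<subseteq> T \<and> (1 + \<epsilon>) * real n < real (card A) \<and>
           \<epsilon> * real (card T) \<le> real (card A) \<and> inj_on (edg r \<delta>) A \<and>
           (\<forall>s\<in>A. \<forall>s'\<in>A. length s = length s' \<longrightarrow> C (edg r \<delta> s) = C (edg r \<delta> s'))"
proof -
  obtain w H where w: "length w = n" and H: "H \<in> prefix_trees lay r \<delta> n C w \<epsilon>"
    and agr: "\<not> real (agr lay C w H) \<le> (1 + \<epsilon>) * real n"
    using ns unfolding eps_sensitive_def by blast
  from H obtain S P where S: "S \<subseteq> L_set r \<delta> C w \<epsilon> n"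
    and PS: "\<forall>v\<in>S. length (P v) = lay v \<and> run r \<delta> (P v) = v \<and>
                  sfx_dist (code_word r \<delta> C (P v)) (take (length (P v)) w) < 1 - \<epsilon>"
    and Hdef: "H = (\<Union>v\<in>S. path_edges r \<delta> (P v))" and rt: "rooted_tree r \<delta> H"
    unfolding prefix_trees_def by blast
  have LV: "L_set r \<delta> C w \<epsilon> n \<subseteq> V"
  proof
    fix v assume "v \<in> L_set r \<delta> C w \<epsilon> n"
    then obtain i where i: "i \<in> {1..n}" "v \<in> L_layer r \<delta> C w \<epsilon> i" unfolding L_set_def by blast
    then obtain p where p: "length p = i" "v = run r \<delta> p" unfolding L_layer_def by blast
    have "length p \<le> n" using i p by simp
    then show "v \<in> V" using run_lay[OF lg] p by blast
  qed
  have finV: "finite V" using lg unfolding layered_graph_def by simp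
  have finS: "finite S" by (rule finite_subset[OF order_trans[OF S LV] finV])
  have lenP: "length (P v) \<le> n" if "v \<in> S" for v
  proof -
    have "v \<in> V" using that S LV by (meson subsetD)
    moreover have "\<forall>v\<in>V. lay v \<le> n" using lg unfolding layered_graph_def by simp
    ultimately have "lay v \<le> n" by simp
    then show ?thesis using PS that by simp
  qed
  define e where "e = edg r \<delta>"
  define T where "T = Uf (P ` S)"
  define G where "G s = (C (e s) = w ! (length s - 1))" for s
  define A where "A = {s \<in> T. G s}"
  have Tform: "\<exists>v j. v \<in> S \<and> j < length (P v) \<and> s = take (Suc j) (P v)" if sT: "s \<in> T" for s
  proof -
    have "s \<in> \<Union> (pref ` P ` S)" using sT unfolding T_def Uf_def .
    then obtain v where v: "v \<in> S" "s \<in> pref (P v)" by (auto simp only: UN_iff image_iff)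
    from v(2) obtain j where j: "j < length (P v)" "s = take (Suc j) (P v)" unfolding pref_def by (auto simp only: mem_Collect_eq)
    show ?thesis by (rule exI[of _ v], rule exI[of _ j]) (simp add: v(1) j)
  qed
  have Tlen: "s \<noteq> [] \<and> length s \<le> n" if sT: "s \<in> T" for s
  proof -
    obtain v j where "v \<in> S" "j < length (P v)" "s = take (Suc j) (P v)" using Tform[OF sT] by blast
    moreover then have "length (P v) \<le> n" using lenP by blast
    ultimately show ?thesis by (cases "P v") auto
  qed
  have Ttree: "T \<in> trees n"
  proof -
    have "take i s \<in> T" if "s \<in> T" "0 < i" "i < length s" for s i
      using Uf_take[of s "P ` S" i] that unfolding T_def by simp
    then show ?thesis unfolding trees_def using Tlen by blast
  qed
  have HT: "H = e ` T"
    unfolding Hdef T_def Uf_def e_def path_edges_pref image_UN by simp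
  have injT: "inj_on e T"
  proof (rule inj_onI)
    fix s s' assume s: "s \<in> T" and s': "s' \<in> T" and eq: "e s = e s'"
    obtain v j where v: "v \<in> S" "j < length (P v)" "s = take (Suc j) (P v)" using Tform[OF s] by blast
    obtain v' j' where v': "v' \<in> S" "j' < length (P v')" "s' = take (Suc j') (P v')" using Tform[OF s'] by blast
    have e1: "run r \<delta> (take j (P v)) = run r \<delta> (take j' (P v'))" "P v ! j = P v' ! j'"
      using eq v v' unfolding e_def by (auto simp: edge_take)
    have "path_edges r \<delta> (take j (P v)) \<subseteq> H"
      using path_edges_take[of r \<delta> j "P v"] v unfolding Hdef by blast
    moreover have "path_edges r \<delta> (take j' (P v')) \<subseteq> H"
      using path_edges_take[of r \<delta> j' "P v'"] v' unfolding Hdef by blast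
    ultimately have "take j (P v) = take j' (P v')"
      using rt e1(1) unfolding rooted_tree_def by blast
    then show "s = s'" using v v' e1(2) by (simp add: take_Suc_conv_app_nth)
  qed
  have layT: "lay (fst (e s)) = length s - 1" if "s \<in> T" for s
  proof -
    have "length (butlast s) \<le> length s" by simp
    then have "length (butlast s) \<le> n" using Tlen[OF that] by (meson order_trans)
    then show ?thesis using run_lay[OF lg] unfolding e_def edg_def by simp
  qed
  have agrA: "agr lay C w H = card A"
  proof -
    define M where "M = {(u, a) \<in> H. C (u, a) = w ! lay u}"
    have mem: "x \<in> M \<longleftrightarrow> x \<in> H \<and> C x = w ! lay (fst x)" for x
      unfolding M_def by (cases x) simp
    have "M = e ` A"
    proof (rule set_eqI, rule iffI)
      fix x assume xM: "x \<in> M"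
      have x1: "x \<in> H" and x2: "C x = w ! lay (fst x)" using xM mem[of x] by simp_all
      have "x \<in> e ` T" using x1 HT by simp
      then obtain s where s: "s \<in> T" "x = e s" by (rule imageE)
      have "G s" using x2 layT[OF s(1)] unfolding G_def s(2) by simp
      then have "s \<in> A" using s(1) unfolding A_def by simp
      then show "x \<in> e ` A" unfolding s(2) by (rule imageI)
    next
      fix x assume "x \<in> e ` A"
      then obtain s where sA: "s \<in> A" and xs: "x = e s" by (rule imageE)
      then have s: "s \<in> T" "G s" unfolding A_def by simp_all
      have x1: "x \<in> H" using s(1) HT xs by simp
      have x2: "C x = w ! lay (fst x)" using s(2) layT[OF s(1)] unfolding G_def xs by simp
      show "x \<in> M" using x1 x2 mem[of x] by simp
    qed
    moreover have "inj_on e A" using injT unfolding A_def by (rule inj_on_subset) simp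
    ultimately have "card M = card A" by (simp add: card_image)
    then show ?thesis unfolding agr_def M_def .
  qed
  have dens: "\<epsilon> * real (card T) \<le> real (card A)"
    unfolding T_def A_def
  proof (rule density)
    show "finite (P ` S)" using finS by simp
    show "0 \<le> \<epsilon>" using \<epsilon> by simp
    show "\<forall>p\<in>P ` S. \<forall>i<length p. \<epsilon> * real (length p - i)
            < real (card {j. i \<le> j \<and> j < length p \<and> G (take (Suc j) p)})"
    proof (intro ballI allI impI)
      fix p i assume p: "p \<in> P ` S" and i: "i < length p"
      obtain v where v: "v \<in> S" "p = P v" using p by blast
      have lp: "length p \<le> n" using lenP v by simp
      have "sfx_dist (code_word r \<delta> C (P v)) (take (length (P v)) w) < 1 - \<epsilon>"
        using PS v(1) by blast
      then have sd: "sfx_dist (code_word r \<delta> C p) (take (length p) w) < 1 - \<epsilon>" unfolding v(2) .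
      have "\<epsilon> * real (length p - i) < real (card {j. i \<le> j \<and> j < length p \<and>
              code_word r \<delta> C p ! j = take (length p) w ! j})"
        by (rule sfx_agree[OF _ _ sd i]) (use lp w in \<open>auto simp: code_word_def\<close>)
      moreover have "{j. i \<le> j \<and> j < length p \<and> code_word r \<delta> C p ! j = take (length p) w ! j}
                   = {j. i \<le> j \<and> j < length p \<and> G (take (Suc j) p)}"
        unfolding G_def e_def code_word_def by (auto simp: edge_take)
      ultimately show "\<epsilon> * real (length p - i)
            < real (card {j. i \<le> j \<and> j < length p \<and> G (take (Suc j) p)})" by simp
    qed
  qed
  have big: "(1 + \<epsilon>) * real n < real (card A)" using agr agrA by simp
  have coll: "\<forall>s\<in>A. \<forall>s'\<in>A. length s = length s' \<longrightarrow> C (e s) = C (e s')"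
    unfolding A_def G_def by auto
  have "inj_on e A" using injT unfolding A_def by (rule inj_on_subset) auto
  moreover have "A \<subseteq> T" unfolding A_def by blast
  ultimately show ?thesis using Ttree big dens coll unfolding e_def by blast
qed

lemma term_bound:
  fixes q k \<epsilon> :: real and a t n :: nat
  assumes k: "k \<ge> 1" and e0: "0 < \<epsilon>" and e1: "\<epsilon> < 1/2"
    and q: "q > (2 * k) powr (6 / \<epsilon>^2)"
    and a: "(1 + \<epsilon>) * real n < real a" and t: "\<epsilon> * real t \<le> real a"
  shows "q powr (- (real a - real n)) \<le> 2 powr (- (real n / (4 * \<epsilon>))) * (1 / (8 * k)) ^ t"
proof -
  define L where "L = ln (2 * k)"
  have L2: "ln 2 \<le> L" unfolding L_def using k by simp
  have "0 < ln (2::real)" by simp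
  then have L0: "0 < L" using L2 by linarith
  have qpos: "q > 0" using q by (smt (verit) powr_ge_zero)
  have lnq: "ln q > (6 / \<epsilon>^2) * L"
  proof -
    have pos: "(2 * k) powr (6 / \<epsilon>^2) > 0" using k by simp
    have "ln ((2 * k) powr (6 / \<epsilon>^2)) < ln q" using ln_less_cancel_iff[OF pos qpos] q by simp
    moreover have "ln ((2 * k) powr (6 / \<epsilon>^2)) = (6 / \<epsilon>^2) * ln (2 * k)" using k by (simp add: ln_powr)
    ultimately show ?thesis unfolding L_def by simp
  qed
  define D where "D = real a - real n"
  have D1: "D \<ge> \<epsilon> * real n" unfolding D_def using a by (simp add: algebra_simps)
  have D2: "D * (1 + \<epsilon>) \<ge> \<epsilon> * real a" unfolding D_def using a e0
    by (simp add: algebra_simps)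
  have D3: "\<epsilon> * real a \<ge> \<epsilon>^2 * real t" using t e0 by (simp add: power2_eq_square mult.assoc mult_left_mono)
  have D4: "D * (3/2) \<ge> \<epsilon>^2 * real t"
  proof -
    have "D \<ge> 0" using D1 e0 by (smt (verit) mult_nonneg_nonneg of_nat_0_le_iff)
    then have "D * (1 + \<epsilon>) \<le> D * (3/2)" using e1 by (intro mult_left_mono) auto
    then show ?thesis using D2 D3 by linarith
  qed
  have Dpos: "D \<ge> 0" using D1 e0 by (smt (verit) mult_nonneg_nonneg of_nat_0_le_iff)
  have Dmain: "D \<ge> \<epsilon> * real n / 4 + \<epsilon>^2 * real t / 2" using D1 D4 by linarith
  have e2: "\<epsilon>^2 > 0" using e0 by simp
  have "D * ln q \<ge> D * ((6 / \<epsilon>^2) * L)" using lnq Dpos by (intro mult_left_mono) auto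
  moreover have "D * ((6 / \<epsilon>^2) * L) \<ge> (\<epsilon> * real n / 4 + \<epsilon>^2 * real t / 2) * ((6 / \<epsilon>^2) * L)"
    using Dmain L0 e2 by (intro mult_right_mono) auto
  moreover have "(\<epsilon> * real n / 4 + \<epsilon>^2 * real t / 2) * ((6 / \<epsilon>^2) * L)
      = (3/2) * (real n / \<epsilon>) * L + 3 * real t * L"
    using e0 by (simp add: field_simps power2_eq_square)
  moreover have "(3/2) * (real n / \<epsilon>) * L \<ge> (real n / (4 * \<epsilon>)) * ln 2"
  proof -
    have "(real n / (4 * \<epsilon>)) * ln 2 \<le> (real n / (4 * \<epsilon>)) * L"
      using L2 e0 by (intro mult_left_mono) auto
    also have "\<dots> \<le> (3/2) * (real n / \<epsilon>) * L" using e0 L0 by (simp add: field_simps)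
    finally show ?thesis .
  qed
  moreover have "3 * real t * L \<ge> real t * ln (8 * k)"
  proof -
    have "8 * k \<le> (2 * k) ^ 3" using k by (simp add: power3_eq_cube) (smt (verit) mult_le_cancel_left1 mult_mono)
    then have "ln (8 * k) \<le> ln ((2 * k) ^ 3)" using k by simp
    also have "\<dots> = 3 * L" unfolding L_def using k ln_realpow[of "2 * k" 3] by (simp del: ln_realpow)
    finally have "real t * ln (8 * k) \<le> real t * (3 * L)" by (intro mult_left_mono) auto
    then show ?thesis by (simp add: algebra_simps)
  qed
  ultimately have key: "- D * ln q \<le> - (real n / (4 * \<epsilon>)) * ln 2 - real t * ln (8 * k)" by linarith
  have "q powr (- D) = exp (- D * ln q)" using qpos by (simp add: powr_def)
  also have "\<dots> \<le> exp (- (real n / (4 * \<epsilon>)) * ln 2 - real t * ln (8 * k))" using key by simp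
  also have "\<dots> = 2 powr (- (real n / (4 * \<epsilon>))) * (1 / (8 * k)) ^ t"
  proof -
    have "exp (real t * ln (8 * k)) = exp (ln (8 * k)) ^ t" by (rule exp_of_nat_mult)
    also have "\<dots> = (8 * k) ^ t" using k by simp
    finally have e: "exp (real t * ln (8 * k)) = (8 * k) ^ t" .
    have "exp (- real t * ln (8 * k)) = inverse ((8 * k) ^ t)"
      using e by (simp only: mult_minus_left exp_minus)
    also have "\<dots> = (1 / (8 * k)) ^ t" by (simp add: power_one_over inverse_eq_divide)
    finally have "exp (- real t * ln (8 * k)) = (1 / (8 * k)) ^ t" .
    moreover have "2 powr (- (real n / (4 * \<epsilon>))) = exp (- (real n / (4 * \<epsilon>)) * ln 2)"
      by (simp add: powr_def)
    moreover have "- (real n / (4 * \<epsilon>)) * ln 2 - real t * ln (8 * k)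
        = - (real n / (4 * \<epsilon>)) * ln 2 + (- real t * ln (8 * k))" by simp
    ultimately show ?thesis by (simp only: exp_add)
  qed
  finally show ?thesis unfolding D_def .
qed


lemma count_event:
  fixes E :: "'e set" and e :: "'s \<Rightarrow> 'e" and A A' :: "'s set" and h :: "'s \<Rightarrow> 's"
  assumes fE: "finite E" and inj: "inj_on e A" and eA: "e ` A \<subseteq> E" and A': "A' \<subseteq> A"
    and h: "h ` A' \<subseteq> A - A'"
  shows "card {C \<in> PiE E (\<lambda>_. UNIV :: 'b::finite set). \<forall>s\<in>A'. C (e s) = C (e (h s))}
         \<le> CARD('b) ^ (card E - card A')"
proof -
  define X where "X = {C \<in> PiE E (\<lambda>_. UNIV :: 'b set). \<forall>s\<in>A'. C (e s) = C (e (h s))}"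
  define B where "B = e ` A'"
  have BE: "B \<subseteq> E" unfolding B_def using eA A' by blast
  have cB: "card B = card A'" unfolding B_def by (rule card_image[OF inj_on_subset[OF inj A']])
  have out: "e (h s) \<in> E - B" if "s \<in> A'" for s
  proof -
    have hs: "h s \<in> A" "h s \<notin> A'" using h that by auto
    have "e (h s) \<notin> e ` A'"
    proof
      assume "e (h s) \<in> e ` A'"
      then obtain s' where "s' \<in> A'" "e (h s) = e s'" by blast
      then have "h s = s'" using inj_onD[OF inj _ hs(1) subsetD[OF A']] by blast
      then show False using hs(2) \<open>s' \<in> A'\<close> by simp
    qed
    moreover have "e (h s) \<in> E" using subsetD[OF eA imageI[OF hs(1)]] .
    ultimately show ?thesis unfolding B_def by (rule DiffI[rotated])
  qed
  have injR: "inj_on (\<lambda>C. restrict C (E - B)) X"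
  proof (rule inj_onI)
    fix C C' assume C: "C \<in> X" and C': "C' \<in> X" and eq: "restrict C (E - B) = restrict C' (E - B)"
    have same: "C x = C' x" if "x \<in> E - B" for x
    proof -
      have "restrict C (E - B) x = restrict C' (E - B) x" using eq by simp
      then show ?thesis using that by simp
    qed
    show "C = C'"
    proof (rule ext)
      fix x
      show "C x = C' x"
      proof (cases "x \<in> E")
        case False
        have "C \<in> PiE E (\<lambda>_. UNIV)" "C' \<in> PiE E (\<lambda>_. UNIV)" using C C' unfolding X_def by blast+
        then show ?thesis using PiE_arb[of C E "\<lambda>_. UNIV" x] PiE_arb[of C' E "\<lambda>_. UNIV" x] False by simp
      next
        case True
        show ?thesis
        proof (cases "x \<in> B")
          case False then show ?thesis using True same by simp
        next
          case True
          then obtain s where s: "s \<in> A'" "x = e s" unfolding B_def by blast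
          have "\<forall>s\<in>A'. C (e s) = C (e (h s))" using C unfolding X_def by blast
          then have c1: "C x = C (e (h s))" using s by simp
          have c2: "C (e (h s)) = C' (e (h s))" using same out[OF s(1)] by simp
          have "\<forall>s\<in>A'. C' (e s) = C' (e (h s))" using C' unfolding X_def by blast
          then have c3: "C' (e (h s)) = C' x" using s by simp
          show ?thesis using c1 c2 c3 by simp
        qed
      qed
    qed
  qed
  have "card X \<le> card (PiE (E - B) (\<lambda>_. UNIV :: 'b set))"
  proof (rule card_inj_on_le[OF injR])
    show "(\<lambda>C. restrict C (E - B)) ` X \<subseteq> PiE (E - B) (\<lambda>_. UNIV)"
      by (rule image_subsetI) simp
    show "finite (PiE (E - B) (\<lambda>_. UNIV :: 'b set))" using fE by (simp add: finite_PiE)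
  qed
  also have "\<dots> = CARD('b) ^ card (E - B)" using fE by (simp add: card_PiE)
  also have "card (E - B) = card E - card A'"
    using card_Diff_subset[OF finite_subset[OF BE fE] BE] cB by simp
  finally show ?thesis unfolding X_def .
qed

theorem theorem5p7:
  fixes V :: "'v set" and lay :: "'v \<Rightarrow> nat" and r :: 'v
    and \<delta> :: "'v \<Rightarrow> 'a::finite \<Rightarrow> 'v" and n :: nat and \<epsilon> :: real
  assumes "layered_graph V lay r \<delta> n"
    and "0 < \<epsilon>" and "\<epsilon> < 1/2"
    and "real n \<ge> 2 / (1 - \<epsilon>)"
    and "real CARD('b::finite) > (2 * real CARD('a)) powr (6 / \<epsilon>^2)"
  shows "measure_pmf.prob (random_code V lay n :: ('v \<times> 'a \<Rightarrow> 'b) pmf)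
            {C. eps_sensitive lay r \<delta> n C \<epsilon>} \<ge> 1 - 2 powr (- (real n / (4 * \<epsilon>)))"
proof -
  note lg = assms(1)
  define k where "k = real CARD('a)"
  have k1: "k \<ge> 1" unfolding k_def by simp
  define q where "q = CARD('b)"
  have q1: "q \<ge> 1" unfolding q_def by simp
  define E where "E = (graph_edges V lay n :: ('v \<times> 'a) set)"
  define \<Omega> where "\<Omega> = PiE E (\<lambda>_. UNIV :: 'b set)"
  define e where "e = (edg r \<delta> :: 'a list \<Rightarrow> 'v \<times> 'a)"
  define good where "good = {C :: 'v \<times> 'a \<Rightarrow> 'b. eps_sensitive lay r \<delta> n C \<epsilon>}"
  have finV: "finite V" using lg unfolding layered_graph_def by simp
  have finE: "finite E"
  proof -
    have "E \<subseteq> V \<times> UNIV" unfolding E_def graph_edges_def by auto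
    moreover have "finite (V \<times> (UNIV :: 'a set))" using finV by simp
    ultimately show ?thesis by (rule finite_subset)
  qed
  have fin\<Omega>: "finite \<Omega>" unfolding \<Omega>_def using finE by (simp add: finite_PiE)
  have ne\<Omega>: "\<Omega> \<noteq> {}" unfolding \<Omega>_def by (simp add: PiE_eq_empty_iff)
  have card\<Omega>: "card \<Omega> = q ^ card E" unfolding \<Omega>_def q_def using finE by (simp add: card_PiE)
  have prob: "measure_pmf.prob (random_code V lay n :: ('v \<times> 'a \<Rightarrow> 'b) pmf) good
              = real (card (\<Omega> \<inter> good)) / real (card \<Omega>)"
    unfolding random_code_def \<Omega>_def[symmetric] E_def[symmetric]
    by (rule measure_pmf_of_set[OF ne\<Omega> fin\<Omega>])
  define rep where "rep A s = (SOME s'. s' \<in> A \<and> length s' = length s)" for A :: "'a list set" and s :: "'a list"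
  define A' where "A' A = A - rep A ` A" for A
  define Ev where "Ev A = {C \<in> \<Omega>. \<forall>s\<in>A' A. C (e s) = C (e (rep A s))}" for A
  define Cert where "Cert = {(T, A). T \<in> trees n \<and> A \<subseteq> T \<and> (1 + \<epsilon>) * real n < real (card A) \<and>
                         \<epsilon> * real (card T) \<le> real (card A) \<and> inj_on e A}"
  have rep_in: "rep A s \<in> A \<and> length (rep A s) = length s" if "s \<in> A" for A s
  proof -
    have "\<exists>s'. s' \<in> A \<and> length s' = length s" using that by blast
    then show ?thesis unfolding rep_def by (rule someI_ex)
  qed
  have CertSig: "Cert \<subseteq> Sigma (trees n - {{}}) Pow"
  proof
    fix c assume "c \<in> Cert"
    then obtain T A where c: "c = (T, A)" "T \<in> trees n" "A \<subseteq> T" "(1 + \<epsilon>) * real n < real (card A)"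
      unfolding Cert_def by blast
    have "0 \<le> (1 + \<epsilon>) * real n" using assms(2) by simp
    then have "card A \<noteq> 0" using c(4) by linarith
    then have "A \<noteq> {}" by auto
    then have "T \<noteq> {}" using c(3) by blast
    then show "c \<in> Sigma (trees n - {{}}) Pow" using c by simp
  qed
  have finTn: "finite (trees n :: 'a list set set)" by (rule finite_trees)
  have finSig: "finite (Sigma (trees n - {{}}) (Pow :: 'a list set \<Rightarrow> _))"
  proof (rule finite_SigmaI)
    show "finite (trees n - {{}} :: 'a list set set)" using finTn by simp
  next
    fix T :: "'a list set" assume "T \<in> trees n - {{}}"
    then have "finite T" using finite_tree[of T n] by simp
    then show "finite (Pow T)" by simp
  qed
  have finCert: "finite Cert" using finite_subset[OF CertSig finSig] .
  have cover: "\<Omega> - good \<subseteq> (\<Union>c\<in>Cert. Ev (snd c))"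
  proof
    fix C assume C: "C \<in> \<Omega> - good"
    then have ns: "\<not> eps_sensitive lay r \<delta> n C \<epsilon>" unfolding good_def by simp
    obtain T A where TA: "T \<in> trees n" "A \<subseteq> T" "(1 + \<epsilon>) * real n < real (card A)"
      "\<epsilon> * real (card T) \<le> real (card A)" "inj_on e A"
      and coll: "\<forall>s\<in>A. \<forall>s'\<in>A. length s = length s' \<longrightarrow> C (e s) = C (e s')"
      using cert_exists[OF lg assms(2) ns] unfolding e_def by blast
    have "(T, A) \<in> Cert" unfolding Cert_def using TA by simp
    moreover have "C \<in> Ev A"
    proof -
      have "C (e s) = C (e (rep A s))" if "s \<in> A' A" for s
      proof -
        have sA: "s \<in> A" using that unfolding A'_def by simp
        have r: "rep A s \<in> A" "length s = length (rep A s)" using rep_in[OF sA] by auto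
        have "length s = length (rep A s) \<longrightarrow> C (e s) = C (e (rep A s))"
          using coll sA r(1) by blast
        then show ?thesis using r(2) by blast
      qed
      then show ?thesis unfolding Ev_def using C by simp
    qed
    ultimately show "C \<in> (\<Union>c\<in>Cert. Ev (snd c))" by (intro UN_I[of "(T, A)"]) simp_all
  qed
  define bnd where "bnd T = 2 powr (- (real n / (4 * \<epsilon>))) * (1 / (8 * k)) ^ card T" for T :: "'a list set"
  have evbound: "real (card (Ev A)) / real (card \<Omega>) \<le> bnd T" if c: "(T, A) \<in> Cert" for T A
  proof -
    from c have TA: "T \<in> trees n" "A \<subseteq> T" "(1 + \<epsilon>) * real n < real (card A)"
      "\<epsilon> * real (card T) \<le> real (card A)" "inj_on e A" unfolding Cert_def by auto
    have Tprop: "s \<noteq> [] \<and> length s \<le> n" if "s \<in> A" for s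
      using that TA(1,2) unfolding trees_def by blast
    have finA: "finite A" using finite_subset[OF TA(2) finite_tree[OF TA(1)]] .
    have eA: "e ` A \<subseteq> E"
    proof
      fix x assume "x \<in> e ` A"
      then obtain s where s: "s \<in> A" "x = e s" by blast
      have "length (butlast s) \<le> length s" by simp
      then have "length (butlast s) \<le> n" using Tprop[OF s(1)] by (meson order_trans)
      then have "run r \<delta> (butlast s) \<in> V" "lay (run r \<delta> (butlast s)) = length (butlast s)"
        using run_lay[OF lg] by auto
      moreover have "length (butlast s) < n" using Tprop[OF s(1)] by (cases s) auto
      ultimately show "x \<in> E" unfolding s(2) e_def edg_def E_def graph_edges_def by simp
    qed
    have A'A: "A' A \<subseteq> A" unfolding A'_def by blast
    have hA: "rep A ` A' A \<subseteq> A - A' A"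
    proof
      fix x assume "x \<in> rep A ` A' A"
      then obtain s where s: "s \<in> A' A" "x = rep A s" by blast
      then have sA: "s \<in> A" unfolding A'_def by simp
      have "x \<in> A" using rep_in[OF sA] s(2) by simp
      moreover have "x \<in> rep A ` A" using sA s(2) by blast
      ultimately show "x \<in> A - A' A" unfolding A'_def by blast
    qed
    have cEv: "card (Ev A) \<le> q ^ (card E - card (A' A))"
      unfolding Ev_def \<Omega>_def q_def by (rule count_event[OF finE TA(5) eA A'A hA])
    have repsub: "rep A ` A \<subseteq> (\<lambda>l. SOME s'. s' \<in> A \<and> length s' = l) ` {1..n}"
    proof
      fix x assume "x \<in> rep A ` A"
      then obtain s where s: "s \<in> A" "x = rep A s" by blast
      have "length s \<in> {1..n}" using Tprop[OF s(1)] by (cases s) auto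
      moreover have "x = (\<lambda>l. SOME s'. s' \<in> A \<and> length s' = l) (length s)" using s(2) unfolding rep_def by simp
      ultimately show "x \<in> (\<lambda>l. SOME s'. s' \<in> A \<and> length s' = l) ` {1..n}" by blast
    qed
    have crep: "card (rep A ` A) \<le> n"
    proof -
      have "card (rep A ` A) \<le> card ((\<lambda>l. SOME s'. s' \<in> A \<and> length s' = l) ` {1..n})"
        by (rule card_mono[OF _ repsub]) simp
      also have "\<dots> \<le> card {1..n}" by (rule card_image_le) simp
      finally show ?thesis by simp
    qed
    have repA: "rep A ` A \<subseteq> A" using rep_in by blast
    have cA': "card (A' A) = card A - card (rep A ` A)"
      unfolding A'_def by (rule card_Diff_subset[OF finite_subset[OF repA finA] repA])
    have cA'2: "real (card (A' A)) \<ge> real (card A) - real n"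
      using cA' crep by linarith
    have cAE: "card (A' A) \<le> card E"
    proof -
      have "card (A' A) \<le> card A" using cA' by simp
      also have "card A = card (e ` A)" using card_image[OF TA(5)] by simp
      also have "\<dots> \<le> card E" by (rule card_mono[OF finE eA])
      finally show ?thesis .
    qed
    have qpos: "real q > 0" using q1 by simp
    have "real (card (Ev A)) / real (card \<Omega>) \<le> real (q ^ (card E - card (A' A))) / real (q ^ card E)"
      unfolding card\<Omega> using cEv qpos by (intro divide_right_mono) auto
    also have "\<dots> = 1 / real q ^ card (A' A)"
    proof -
      have eq: "real q ^ card E = real q ^ (card E - card (A' A)) * real q ^ card (A' A)"
        using cAE by (simp add: power_add[symmetric])
      have pos: "real q ^ (card E - card (A' A)) > 0" "real q ^ card (A' A) > 0" using qpos by simp_all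
      have "real (q ^ (card E - card (A' A))) / real (q ^ card E)
            = real q ^ (card E - card (A' A)) / (real q ^ (card E - card (A' A)) * real q ^ card (A' A))"
        unfolding of_nat_power eq ..
      also have "\<dots> = 1 / real q ^ card (A' A)"
      proof -
        have gen: "x / (x * y) = 1 / y" if "x > 0" for x y :: real using that by simp
        show ?thesis by (rule gen[OF pos(1)])
      qed
      finally show ?thesis .
    qed
    also have "\<dots> = real q powr (- real (card (A' A)))"
      using qpos by (simp add: powr_minus powr_realpow divide_inverse)
    also have "\<dots> \<le> real q powr (- (real (card A) - real n))"
      using q1 cA'2 by (intro powr_mono) auto
    also have "\<dots> \<le> bnd T" unfolding bnd_def q_def k_def
      by (rule term_bound) (use TA assms(2,3,5) in auto)
    finally show ?thesis .
  qed
  have c1: "card \<Omega> \<le> card (\<Omega> \<inter> good) + card (\<Omega> - good)"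
  proof -
    have "\<Omega> = (\<Omega> \<inter> good) \<union> (\<Omega> - good)" by blast
    then have "card \<Omega> = card ((\<Omega> \<inter> good) \<union> (\<Omega> - good))" by simp
    also have "\<dots> \<le> card (\<Omega> \<inter> good) + card (\<Omega> - good)" by (rule card_Un_le)
    finally show ?thesis .
  qed
  have c2: "card (\<Omega> - good) \<le> (\<Sum>c\<in>Cert. card (Ev (snd c)))"
  proof -
    have finU: "finite (\<Union>c\<in>Cert. Ev (snd c))"
      using finCert by (intro finite_UN_I) (auto simp: Ev_def fin\<Omega>)
    have "card (\<Omega> - good) \<le> card (\<Union>c\<in>Cert. Ev (snd c))" by (rule card_mono[OF finU cover])
    also have "\<dots> \<le> (\<Sum>c\<in>Cert. card (Ev (snd c)))" by (rule card_UN_le[OF finCert])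
    finally show ?thesis .
  qed
  have cpos: "real (card \<Omega>) > 0" using fin\<Omega> ne\<Omega> by (simp add: card_gt_0_iff)
  have "1 - (\<Sum>c\<in>Cert. real (card (Ev (snd c))) / real (card \<Omega>)) \<le> real (card (\<Omega> \<inter> good)) / real (card \<Omega>)"
  proof -
    have "real (card \<Omega>) \<le> real (card (\<Omega> \<inter> good)) + (\<Sum>c\<in>Cert. real (card (Ev (snd c))))"
      using c1 c2 by (simp add: of_nat_sum[symmetric] del: of_nat_sum)
    then have "real (card \<Omega>) - (\<Sum>c\<in>Cert. real (card (Ev (snd c)))) \<le> real (card (\<Omega> \<inter> good))" by linarith
    then have "(real (card \<Omega>) - (\<Sum>c\<in>Cert. real (card (Ev (snd c))))) / real (card \<Omega>) \<le> real (card (\<Omega> \<inter> good)) / real (card \<Omega>)"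
      using cpos by (intro divide_right_mono) auto
    then show ?thesis using cpos by (simp add: diff_divide_distrib sum_divide_distrib)
  qed
  moreover have "(\<Sum>c\<in>Cert. real (card (Ev (snd c))) / real (card \<Omega>)) \<le> (\<Sum>c\<in>Cert. bnd (fst c))"
    by (rule sum_mono) (use evbound in \<open>auto simp: split_beta\<close>)
  moreover have "(\<Sum>c\<in>Cert. bnd (fst c)) \<le> (\<Sum>c\<in>Sigma (trees n - {{}}) Pow. bnd (fst c))"
    by (rule sum_mono2[OF finSig CertSig]) (simp add: bnd_def k_def)
  moreover have "(\<Sum>c\<in>Sigma (trees n - {{}}) Pow. bnd (fst c)) \<le> 2 powr (- (real n / (4 * \<epsilon>)))"
  proof -
    define z where "z = 1 / (4 * k)"
    have "(\<Sum>c\<in>Sigma (trees n - {{}}) Pow. bnd (fst c)) = (\<Sum>T\<in>trees n - {{}}. \<Sum>A\<in>Pow T. bnd T)"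
    proof -
      have "(\<Sum>T\<in>trees n - {{}}. \<Sum>A\<in>Pow T. bnd T) = (\<Sum>(T, A)\<in>Sigma (trees n - {{}}) Pow. bnd T)"
      proof (rule sum.Sigma)
        show "finite (trees n - {{}} :: 'a list set set)" using finTn by simp
        show "\<forall>T\<in>(trees n - {{}} :: 'a list set set). finite (Pow T)"
        proof
          fix T :: "'a list set" assume "T \<in> trees n - {{}}"
          then have "finite T" using finite_tree[of T n] by simp
          then show "finite (Pow T)" by simp
        qed
      qed
      then show ?thesis by (simp add: split_beta)
    qed
    also have "\<dots> = (\<Sum>T\<in>trees n - {{}}. 2 ^ card T * bnd T)"
    proof (rule sum.cong)
      fix T :: "'a list set" assume "T \<in> trees n - {{}}"
      then have "finite T" using finite_tree[of T n] by simp
      then show "(\<Sum>A\<in>Pow T. bnd T) = 2 ^ card T * bnd T" by (simp add: card_Pow)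
    qed simp
    also have "\<dots> = 2 powr (- (real n / (4 * \<epsilon>))) * (\<Sum>T\<in>(trees n - {{}} :: 'a list set set). z ^ card T)"
    proof -
      have "2 ^ card T * bnd T = 2 powr (- (real n / (4 * \<epsilon>))) * z ^ card T" for T :: "'a list set"
      proof -
        have "(2::real) ^ card T * (1 / (8 * k)) ^ card T = (2 * (1 / (8 * k))) ^ card T"
          by (rule power_mult_distrib[symmetric])
        also have "2 * (1 / (8 * k)) = z" unfolding z_def by simp
        finally show ?thesis unfolding bnd_def by (simp add: algebra_simps)
      qed
      then show ?thesis by (simp add: sum_distrib_left)
    qed
    also have "\<dots> \<le> 2 powr (- (real n / (4 * \<epsilon>))) * 1"
    proof (rule mult_left_mono)
      have em: "{} \<in> (trees n :: 'a list set set)" unfolding trees_def by simp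
      have "(\<Sum>T\<in>(trees n - {{}} :: 'a list set set). z ^ card T) = (\<Sum>T\<in>(trees n :: 'a list set set). z ^ card T) - z ^ card ({} :: 'a list set)"
        using sum_diff1[OF finTn, of "\<lambda>T. z ^ card T" "{}"] em by simp
      also have "\<dots> \<le> 2 - 1" using W_bound[of n, where 'a='a] unfolding z_def k_def by simp
      finally show "(\<Sum>T\<in>(trees n - {{}} :: 'a list set set). z ^ card T) \<le> 1" by simp
      show "0 \<le> 2 powr (- (real n / (4 * \<epsilon>)))" by simp
    qed
    finally show ?thesis by simp
  qed
  ultimately have "1 - 2 powr (- (real n / (4 * \<epsilon>))) \<le> real (card (\<Omega> \<inter> good)) / real (card \<Omega>)"
    by linarith
  then show ?thesis using prob unfolding good_def by simp
qed

end
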